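(* Let $n \ge 3$ be an integer, let $\alpha$ be a primitive element of $\mathbb{F}_{2^n}$ (identified with $\mathbb{F}_2^n$), and let $X = \{0, \alpha^{i_1}, \ldots, \alpha^{i_7}\}$ be a $3$-dimensional $\mathbb{F}_2$-subspace with $|\Delta(X)| = 42$. Then the cyclic shifts $\Phi_j(X)$, $0 \le j \le 2^n-2$, are $2^n-1$ pairwise distinct $3$-dimensional subspaces, and the $7\cdot(2^n-1)$ two-dimensional subspaces contained in these $2^n-1$ subspaces (seven in each) are pairwise distinct.
   Context: The cyclic shift mapping is $\Phi_j(\alpha^i) = \alpha^{i+j}$ (exponents modulo $2^n-1$), $\Phi_j(0)=0$, applied to sets elementwise. For a $3$-dimensional subspace $X = \{0,\alpha^{i_1},\ldots,\alpha^{i_7}\}$ with $i_1,\ldots,i_7 \in \{0,\ldots,2^n-2\}$ distinct, its difference set is $\Delta(X) = \{ i_r - i_s \bmod (2^n-1) : 1 \le r,s \le 7,\ r \ne s\}$. *)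

theory Defs
  imports Main
begin

text \<open>The field F_(2^n) is modelled as a finite field type of cardinality 2^n and
characteristic 2; it is viewed as the F_2-vector space F_2^n (scalars 0 and 1).\<close>

definition char2 :: "'a::field itself \<Rightarrow> bool" where
  "char2 _ \<longleftrightarrow> (1::'a) + 1 = 0"

definition primitive_elem :: "'a::field \<Rightarrow> bool" where
  "primitive_elem a \<longleftrightarrow> a \<noteq> 0 \<and> (\<forall>x. x \<noteq> 0 \<longrightarrow> (\<exists>i::nat. x = a ^ i))"

text \<open>F_2-linear algebra: the span of B consists of the sums of subsets of B
(the only scalars are 0 and 1); B is independent iff no nonempty subset sums to 0.\<close>

definition f2_span :: "'a::field set \<Rightarrow> 'a set" where
  "f2_span B = {sum id T | T. T \<subseteq> B}"

definition f2_indep :: "'a::field set \<Rightarrow> bool" where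
  "f2_indep B \<longleftrightarrow> (\<forall>T. T \<subseteq> B \<longrightarrow> T \<noteq> {} \<longrightarrow> sum id T \<noteq> 0)"

definition f2_subspace :: "'a::field set \<Rightarrow> bool" where
  "f2_subspace S \<longleftrightarrow> 0 \<in> S \<and> (\<forall>x\<in>S. \<forall>y\<in>S. x + y \<in> S)"

definition f2_subspace_dim :: "'a::field set \<Rightarrow> nat \<Rightarrow> bool" where
  "f2_subspace_dim S d \<longleftrightarrow> f2_subspace S \<and>
     (\<exists>B. finite B \<and> card B = d \<and> f2_indep B \<and> f2_span B = S)"

text \<open>Discrete logarithm to base a, exponents in {0..N-1} (N = 2^n - 1).\<close>
definition dlog :: "'a::field \<Rightarrow> nat \<Rightarrow> 'a \<Rightarrow> nat" where
  "dlog a N x = (THE i. i < N \<and> a ^ i = x)"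

definition Phi :: "'a::field \<Rightarrow> nat \<Rightarrow> nat \<Rightarrow> 'a \<Rightarrow> 'a" where
  "Phi a N j x = (if x = 0 then 0 else a ^ ((dlog a N x + j) mod N))"

definition Phi_set :: "'a::field \<Rightarrow> nat \<Rightarrow> nat \<Rightarrow> 'a set \<Rightarrow> 'a set" where
  "Phi_set a N j X = Phi a N j ` X"

definition Delta :: "nat \<Rightarrow> nat set \<Rightarrow> int set" where
  "Delta N I = {(int r - int s) mod int N | r s. r \<in> I \<and> s \<in> I \<and> r \<noteq> s}"

end

theory Submission
  imports Defs
begin


lemma c2_xx: "char2 TYPE('a::field) \<Longrightarrow> (x::'a) + x = 0"
proof -
  assume "char2 TYPE('a)"
  hence "(1::'a) + 1 = 0" by (simp add: char2_def)
  hence "(1 + 1) * x = 0" by simp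
  thus ?thesis by (simp add: distrib_right)
qed

lemma c2_xxy: "char2 TYPE('a::field) \<Longrightarrow> (x::'a) + (x + y) = y"
  by (metis add.assoc add_0 c2_xx)

lemma c2_neq: "char2 TYPE('a::field) \<Longrightarrow> (x::'a) + y \<noteq> 0 \<Longrightarrow> x \<noteq> y"
  using c2_xx by blast

lemma span_eq: "f2_span B = sum id ` Pow B"
  unfolding f2_span_def by auto

lemma sub2: "T \<subseteq> {x,y} \<longleftrightarrow> T = {} \<or> T = {x} \<or> T = {y} \<or> T = {x,y}"
  by blast

lemma span2: assumes "(x::'a::field) \<noteq> y" shows "f2_span {x,y} = {0,x,y,x+y}"
proof -
  have s: "sum id {x,y} = x + y" using assms by simp
  show ?thesis unfolding f2_span_def sub2
  proof (intro equalityI subsetI)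
    fix z assume "z \<in> {sum id T |T. T = {} \<or> T = {x} \<or> T = {y} \<or> T = {x, y}}"
    then obtain T where "z = sum id T" "T = {} \<or> T = {x} \<or> T = {y} \<or> T = {x, y}" by blast
    thus "z \<in> {0,x,y,x+y}" using s by auto
  next
    fix z assume "z \<in> {0,x,y,x+y}"
    hence "z = sum id {} \<or> z = sum id {x} \<or> z = sum id {y} \<or> z = sum id {x,y}" using s by auto
    thus "z \<in> {sum id T |T. T = {} \<or> T = {x} \<or> T = {y} \<or> T = {x, y}}" by blast
  qed
qed

lemma indep2: assumes "(x::'a::field) \<noteq> y" shows "f2_indep {x,y} \<longleftrightarrow> x \<noteq> 0 \<and> y \<noteq> 0 \<and> x + y \<noteq> 0"
proof -
  have s: "sum id {x,y} = x + y" using assms by simp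
  show ?thesis unfolding f2_indep_def sub2 using s by auto
qed

lemma dim2_D:
  assumes d: "f2_subspace_dim (Y::'a::field set) 2"
  shows "\<exists>x y. x \<noteq> 0 \<and> y \<noteq> 0 \<and> x \<noteq> y \<and> Y = {0,x,y,x+y}"
proof -
  obtain B where B: "card B = 2" "f2_indep B" "f2_span B = Y"
    using d unfolding f2_subspace_dim_def by auto
  obtain x y where xy: "B = {x,y}" "x \<noteq> y" using B(1) unfolding card_2_iff by blast
  show ?thesis using B xy indep2[OF xy(2)] span2[OF xy(2)] by auto
qed

lemma dim2_I:
  assumes c: "char2 TYPE('a::field)" and "(x::'a) \<noteq> 0" "y \<noteq> 0" "x \<noteq> y"
  shows "f2_subspace_dim {0,x,y,x+y} 2"
proof -
  have xx: "\<And>z::'a. z + z = 0" using c c2_xx by blast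
  have xxy: "\<And>z w::'a. z + (z + w) = w" using c c2_xxy by blast
  have r1: "x + x = 0" "y + y = 0" "x + (x + y) = y" "(x + y) + (x + y) = 0"
    by (rule xx, rule xx, rule xxy, rule xx)
  have r4: "(x + y) + x = y" by (rule trans[OF add.commute[of "x+y" x] r1(3)])
  have r5: "y + (x + y) = x" by (rule trans[OF arg_cong[OF add.commute[of x y], of "(+) y"] xxy])
  have r6: "(x + y) + y = x" by (rule trans[OF add.commute[of "x+y" y] r5])
  have r7: "y + x = x + y" by (rule add.commute)
  note r = r1 r4 r5 r6 r7
  have s: "f2_subspace {0,x,y,x+y}"
    unfolding f2_subspace_def by (simp only: r insert_iff empty_iff ball_simps simp_thms add_0 add_0_right)
  have xy0: "x + y \<noteq> 0"
  proof
    assume "x + y = 0" hence "x + (x + y) = x" by simp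
    thus False using r(3) assms(4) by simp
  qed
  have "f2_indep {x,y}" using indep2[OF assms(4)] assms xy0 by simp
  moreover have "card {x,y} = 2" using assms(4) by simp
  ultimately show ?thesis using s span2[OF assms(4)] unfolding f2_subspace_dim_def
    by (intro conjI exI[of _ "{x,y}"]) simp_all
qed



lemma scale_dim:
  assumes c0: "(c::'a::field) \<noteq> 0" and d: "f2_subspace_dim S k"
  shows "f2_subspace_dim ((*) c ` S) k"
proof -
  obtain B where B: "finite B" "card B = k" "f2_indep B" "f2_span B = S"
    using d unfolding f2_subspace_dim_def by auto
  have inj: "inj_on ((*) c) A" for A using c0 by (auto intro: inj_onI)
  have sm: "sum id ((*) c ` T) = c * sum id T" for T
    using inj[of T] by (simp add: sum.reindex sum_distrib_left)
  have sub: "0 \<in> S" "\<And>p q. p \<in> S \<Longrightarrow> q \<in> S \<Longrightarrow> p + q \<in> S"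
    using d unfolding f2_subspace_dim_def f2_subspace_def by auto
  have "f2_subspace ((*) c ` S)" unfolding f2_subspace_def
  proof (intro conjI ballI)
    show "0 \<in> (*) c ` S" using sub(1) by (metis image_eqI mult_zero_right)
    fix x y assume "x \<in> (*) c ` S" "y \<in> (*) c ` S"
    then obtain p q where "p \<in> S" "q \<in> S" "x = c * p" "y = c * q" by blast
    hence "x + y = c * (p + q)" "p + q \<in> S" using sub(2) by (simp_all add: distrib_left)
    thus "x + y \<in> (*) c ` S" by blast
  qed
  moreover have "f2_indep ((*) c ` B)" unfolding f2_indep_def
  proof (intro allI impI)
    fix T assume "T \<subseteq> (*) c ` B" "T \<noteq> {}"
    then obtain T0 where "T0 \<subseteq> B" "T = (*) c ` T0" "T0 \<noteq> {}" by (auto simp: subset_image_iff)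
    hence "sum id T = c * sum id T0" "sum id T0 \<noteq> 0" using B(3) sm unfolding f2_indep_def by auto
    thus "sum id T \<noteq> 0" using c0 by simp
  qed
  moreover have "f2_span ((*) c ` B) = (*) c ` S"
    unfolding B(4)[symmetric] span_eq
  proof (intro equalityI subsetI)
    fix z assume "z \<in> sum id ` Pow ((*) c ` B)"
    then obtain T where "T \<subseteq> (*) c ` B" "z = sum id T" by auto
    then obtain T0 where "T0 \<subseteq> B" "z = sum id ((*) c ` T0)" by (auto simp: subset_image_iff)
    hence "z = c * sum id T0" "T0 \<in> Pow B" using sm by auto
    thus "z \<in> (*) c ` sum id ` Pow B" by blast
  next
    fix z assume "z \<in> (*) c ` sum id ` Pow B"
    then obtain T0 where "T0 \<subseteq> B" "z = c * sum id T0" by auto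
    hence "z = sum id ((*) c ` T0)" "(*) c ` T0 \<in> Pow ((*) c ` B)" using sm by auto
    thus "z \<in> sum id ` Pow ((*) c ` B)" by blast
  qed
  moreover have "card ((*) c ` B) = k" using B(2) card_image inj by metis
  ultimately show ?thesis unfolding f2_subspace_dim_def using B(1)
    by (intro conjI exI[of _ "(*) c ` B"]) (simp_all only: finite_imageI)
qed



lemma c2_two: "char2 TYPE('a::field) \<Longrightarrow> (2::'a) = 0"
  unfolding char2_def by simp

lemma count7:
  fixes u v w :: "'a::field"
  assumes c: "char2 TYPE('a)"
    and nz: "u \<noteq> 0" "v \<noteq> 0" "w \<noteq> 0" "u + v \<noteq> 0" "u + w \<noteq> 0" "v + w \<noteq> 0" "u + (v + w) \<noteq> 0"
    and Z: "Z = {0, u, v, w, u + v, u + w, v + w, u + (v + w)}"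
  shows "card {Y. f2_subspace_dim Y 2 \<and> Y \<subseteq> Z} = 7"
proof -
  have two: "(2::'a) = 0" using c c2_two by blast
  have xx: "\<And>z::'a. z + z = 0" using c c2_xx by blast
  have xxy: "\<And>z y::'a. z + (z + y) = y" using c c2_xxy by blast
  note N = xx xxy add.assoc add.commute add.left_commute
  note dist = TrueI
  have "0 \<noteq> u" by (rule c2_neq[OF c]) (simp add: N nz)
  note dist = dist this
  have "0 \<noteq> v" by (rule c2_neq[OF c]) (simp add: N nz)
  note dist = dist this
  have "0 \<noteq> w" by (rule c2_neq[OF c]) (simp add: N nz)
  note dist = dist this
  have "0 \<noteq> u + v" by (rule c2_neq[OF c]) (simp add: N nz)
  note dist = dist this
  have "0 \<noteq> u + w" by (rule c2_neq[OF c]) (simp add: N nz)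
  note dist = dist this
  have "0 \<noteq> v + w" by (rule c2_neq[OF c]) (simp add: N nz)
  note dist = dist this
  have "0 \<noteq> u + (v + w)" by (rule c2_neq[OF c]) (simp add: N nz)
  note dist = dist this
  have "u \<noteq> 0" by (rule c2_neq[OF c]) (simp add: N nz)
  note dist = dist this
  have "u \<noteq> v" by (rule c2_neq[OF c]) (simp add: N nz)
  note dist = dist this
  have "u \<noteq> w" by (rule c2_neq[OF c]) (simp add: N nz)
  note dist = dist this
  have "u \<noteq> u + v" by (rule c2_neq[OF c]) (simp add: N nz)
  note dist = dist this
  have "u \<noteq> u + w" by (rule c2_neq[OF c]) (simp add: N nz)
  note dist = dist this
  have "u \<noteq> v + w" by (rule c2_neq[OF c]) (simp add: N nz)
  note dist = dist this
  have "u \<noteq> u + (v + w)" by (rule c2_neq[OF c]) (simp add: N nz)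
  note dist = dist this
  have "v \<noteq> 0" by (rule c2_neq[OF c]) (simp add: N nz)
  note dist = dist this
  have "v \<noteq> u" by (rule c2_neq[OF c]) (simp add: N nz)
  note dist = dist this
  have "v \<noteq> w" by (rule c2_neq[OF c]) (simp add: N nz)
  note dist = dist this
  have "v \<noteq> u + v" by (rule c2_neq[OF c]) (simp add: N nz)
  note dist = dist this
  have "v \<noteq> u + w" by (rule c2_neq[OF c]) (simp add: N nz)
  note dist = dist this
  have "v \<noteq> v + w" by (rule c2_neq[OF c]) (simp add: N nz)
  note dist = dist this
  have "v \<noteq> u + (v + w)" by (rule c2_neq[OF c]) (simp add: N nz)
  note dist = dist this
  have "w \<noteq> 0" by (rule c2_neq[OF c]) (simp add: N nz)
  note dist = dist this
  have "w \<noteq> u" by (rule c2_neq[OF c]) (simp add: N nz)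
  note dist = dist this
  have "w \<noteq> v" by (rule c2_neq[OF c]) (simp add: N nz)
  note dist = dist this
  have "w \<noteq> u + v" by (rule c2_neq[OF c]) (simp add: N nz)
  note dist = dist this
  have "w \<noteq> u + w" by (rule c2_neq[OF c]) (simp add: N nz)
  note dist = dist this
  have "w \<noteq> v + w" by (rule c2_neq[OF c]) (simp add: N nz)
  note dist = dist this
  have "w \<noteq> u + (v + w)" by (rule c2_neq[OF c]) (simp add: N nz)
  note dist = dist this
  have "u + v \<noteq> 0" by (rule c2_neq[OF c]) (simp add: N nz)
  note dist = dist this
  have "u + v \<noteq> u" by (rule c2_neq[OF c]) (simp add: N nz)
  note dist = dist this
  have "u + v \<noteq> v" by (rule c2_neq[OF c]) (simp add: N nz)
  note dist = dist this
  have "u + v \<noteq> w" by (rule c2_neq[OF c]) (simp add: N nz)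
  note dist = dist this
  have "u + v \<noteq> u + w" by (rule c2_neq[OF c]) (simp add: N nz)
  note dist = dist this
  have "u + v \<noteq> v + w" by (rule c2_neq[OF c]) (simp add: N nz)
  note dist = dist this
  have "u + v \<noteq> u + (v + w)" by (rule c2_neq[OF c]) (simp add: N nz)
  note dist = dist this
  have "u + w \<noteq> 0" by (rule c2_neq[OF c]) (simp add: N nz)
  note dist = dist this
  have "u + w \<noteq> u" by (rule c2_neq[OF c]) (simp add: N nz)
  note dist = dist this
  have "u + w \<noteq> v" by (rule c2_neq[OF c]) (simp add: N nz)
  note dist = dist this
  have "u + w \<noteq> w" by (rule c2_neq[OF c]) (simp add: N nz)
  note dist = dist this
  have "u + w \<noteq> u + v" by (rule c2_neq[OF c]) (simp add: N nz)
  note dist = dist this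
  have "u + w \<noteq> v + w" by (rule c2_neq[OF c]) (simp add: N nz)
  note dist = dist this
  have "u + w \<noteq> u + (v + w)" by (rule c2_neq[OF c]) (simp add: N nz)
  note dist = dist this
  have "v + w \<noteq> 0" by (rule c2_neq[OF c]) (simp add: N nz)
  note dist = dist this
  have "v + w \<noteq> u" by (rule c2_neq[OF c]) (simp add: N nz)
  note dist = dist this
  have "v + w \<noteq> v" by (rule c2_neq[OF c]) (simp add: N nz)
  note dist = dist this
  have "v + w \<noteq> w" by (rule c2_neq[OF c]) (simp add: N nz)
  note dist = dist this
  have "v + w \<noteq> u + v" by (rule c2_neq[OF c]) (simp add: N nz)
  note dist = dist this
  have "v + w \<noteq> u + w" by (rule c2_neq[OF c]) (simp add: N nz)
  note dist = dist this
  have "v + w \<noteq> u + (v + w)" by (rule c2_neq[OF c]) (simp add: N nz)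
  note dist = dist this
  have "u + (v + w) \<noteq> 0" by (rule c2_neq[OF c]) (simp add: N nz)
  note dist = dist this
  have "u + (v + w) \<noteq> u" by (rule c2_neq[OF c]) (simp add: N nz)
  note dist = dist this
  have "u + (v + w) \<noteq> v" by (rule c2_neq[OF c]) (simp add: N nz)
  note dist = dist this
  have "u + (v + w) \<noteq> w" by (rule c2_neq[OF c]) (simp add: N nz)
  note dist = dist this
  have "u + (v + w) \<noteq> u + v" by (rule c2_neq[OF c]) (simp add: N nz)
  note dist = dist this
  have "u + (v + w) \<noteq> u + w" by (rule c2_neq[OF c]) (simp add: N nz)
  note dist = dist this
  have "u + (v + w) \<noteq> v + w" by (rule c2_neq[OF c]) (simp add: N nz)
  note dist = dist this
  have m1: "{0, u, v, u + v} \<in> {Y. f2_subspace_dim Y 2 \<and> Y \<subseteq> Z}"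
    unfolding Z using dist by (intro CollectI conjI dim2_I[OF c]) (simp_all add: N)
  have m2: "{0, u, w, u + w} \<in> {Y. f2_subspace_dim Y 2 \<and> Y \<subseteq> Z}"
    unfolding Z using dist by (intro CollectI conjI dim2_I[OF c]) (simp_all add: N)
  have m3: "{0, v, w, v + w} \<in> {Y. f2_subspace_dim Y 2 \<and> Y \<subseteq> Z}"
    unfolding Z using dist by (intro CollectI conjI dim2_I[OF c]) (simp_all add: N)
  have m4: "{0, u, v + w, u + (v + w)} \<in> {Y. f2_subspace_dim Y 2 \<and> Y \<subseteq> Z}"
    unfolding Z using dist by (intro CollectI conjI dim2_I[OF c]) (simp_all add: N)
  have m5: "{0, v, u + w, v + (u + w)} \<in> {Y. f2_subspace_dim Y 2 \<and> Y \<subseteq> Z}"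
    unfolding Z using dist by (intro CollectI conjI dim2_I[OF c]) (simp_all add: N)
  have m6: "{0, w, u + v, w + (u + v)} \<in> {Y. f2_subspace_dim Y 2 \<and> Y \<subseteq> Z}"
    unfolding Z using dist by (intro CollectI conjI dim2_I[OF c]) (simp_all add: N)
  have m7: "{0, u + v, u + w, (u + v) + (u + w)} \<in> {Y. f2_subspace_dim Y 2 \<and> Y \<subseteq> Z}"
    unfolding Z using dist by (intro CollectI conjI dim2_I[OF c]) (simp_all add: N)
  have sub: "{Y. f2_subspace_dim Y 2 \<and> Y \<subseteq> Z} \<subseteq> {{0, u, v, u + v}, {0, u, w, u + w}, {0, v, w, v + w}, {0, u, v + w, u + (v + w)}, {0, v, u + w, v + (u + w)}, {0, w, u + v, w + (u + v)}, {0, u + v, u + w, (u + v) + (u + w)}}"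
  proof
    fix Y assume "Y \<in> {Y. f2_subspace_dim Y 2 \<and> Y \<subseteq> Z}"
    hence d: "f2_subspace_dim Y 2" "Y \<subseteq> Z" by auto
    obtain x y where xy: "x \<noteq> 0" "y \<noteq> 0" "x \<noteq> y" "Y = {0,x,y,x+y}" using dim2_D[OF d(1)] by blast
    have "x \<in> {u, v, w, u + v, u + w, v + w, u + (v + w)}" "y \<in> {u, v, w, u + v, u + w, v + w, u + (v + w)}" using d(2) xy unfolding Z by auto
    thus "Y \<in> {{0, u, v, u + v}, {0, u, w, u + w}, {0, v, w, v + w}, {0, u, v + w, u + (v + w)}, {0, v, u + w, v + (u + w)}, {0, w, u + v, w + (u + v)}, {0, u + v, u + w, (u + v) + (u + w)}}" using xy(3) unfolding xy(4)
      by (elim insertE emptyE) (simp_all add: N dist insert_commute)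
  qed
  have eq: "{Y. f2_subspace_dim Y 2 \<and> Y \<subseteq> Z} = {{0, u, v, u + v}, {0, u, w, u + w}, {0, v, w, v + w}, {0, u, v + w, u + (v + w)}, {0, v, u + w, v + (u + w)}, {0, w, u + v, w + (u + v)}, {0, u + v, u + w, (u + v) + (u + w)}}"
    by (rule equalityI[OF sub]) (simp only: insert_subset m1 m2 m3 m4 m5 m6 m7 empty_subsetI simp_thms)
  have le: "card {{0, u, v, u + v}, {0, u, w, u + w}, {0, v, w, v + w}, {0, u, v + w, u + (v + w)}, {0, v, u + w, v + (u + w)}, {0, w, u + v, w + (u + v)}, {0, u + v, u + w, (u + v) + (u + w)}} \<le> 7"
    using card_length[of "[{0, u, v, u + v}, {0, u, w, u + w}, {0, v, w, v + w}, {0, u, v + w, u + (v + w)}, {0, v, u + w, v + (u + w)}, {0, w, u + v, w + (u + v)}, {0, u + v, u + w, (u + v) + (u + w)}]"] by simp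
  have fin: "finite {{0, u, v, u + v}, {0, u, w, u + w}, {0, v, w, v + w}, {0, u, v + w, u + (v + w)}, {0, v, u + w, v + (u + w)}, {0, w, u + v, w + (u + v)}, {0, u + v, u + w, (u + v) + (u + w)}}" by (simp only: finite.emptyI finite.insertI)
  have g: "(\<lambda>Y. (u \<in> Y, v \<in> Y, w \<in> Y)) ` {{0, u, v, u + v}, {0, u, w, u + w}, {0, v, w, v + w}, {0, u, v + w, u + (v + w)}, {0, v, u + w, v + (u + w)}, {0, w, u + v, w + (u + v)}, {0, u + v, u + w, (u + v) + (u + w)}} = {(True,True,False),(True,False,True),(False,True,True),(True,False,False),(False,True,False),(False,False,True),(False,False,False)}"
    using dist by (simp add: N)
  have c7: "card {(True,True,False),(True,False,True),(False,True,True),(True,False,False),(False,True,False),(False,False,True),(False,False,False)} = 7" by simp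
  have ge: "7 \<le> card {{0, u, v, u + v}, {0, u, w, u + w}, {0, v, w, v + w}, {0, u, v + w, u + (v + w)}, {0, v, u + w, v + (u + w)}, {0, w, u + v, w + (u + v)}, {0, u + v, u + w, (u + v) + (u + w)}}"
    using card_image_le[OF fin, of "\<lambda>Y. (u \<in> Y, v \<in> Y, w \<in> Y)"] unfolding g c7 .
  show ?thesis unfolding eq by (rule antisym[OF le ge])
qed



lemma sub3: "T \<subseteq> {u,v,w} \<longleftrightarrow> T = {} \<or> T = {u} \<or> T = {v} \<or> T = {w} \<or> T = {u,v} \<or> T = {u,w} \<or> T = {v,w} \<or> T = {u,v,w}"
  by blast

lemma dim3_D:
  assumes d: "f2_subspace_dim (Z::'a::field set) 3"
  shows "\<exists>u v w. u \<noteq> 0 \<and> v \<noteq> 0 \<and> w \<noteq> 0 \<and> u + v \<noteq> 0 \<and> u + w \<noteq> 0 \<and> v + w \<noteq> 0 \<and> u + (v + w) \<noteq> 0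
     \<and> Z = {0, u, v, w, u + v, u + w, v + w, u + (v + w)}"
proof -
  obtain B where B: "card B = 3" "f2_indep B" "f2_span B = Z"
    using d unfolding f2_subspace_dim_def by auto
  obtain u v w where uvw: "B = {u,v,w}" "u \<noteq> v" "v \<noteq> w" "u \<noteq> w" using B(1) unfolding card_3_iff by blast
  have s: "sum id {u,v} = u + v" "sum id {u,w} = u + w" "sum id {v,w} = v + w" "sum id {u,v,w} = u + (v + w)"
    using uvw by simp_all
  have nz: "u \<noteq> 0 \<and> v \<noteq> 0 \<and> w \<noteq> 0 \<and> u + v \<noteq> 0 \<and> u + w \<noteq> 0 \<and> v + w \<noteq> 0 \<and> u + (v + w) \<noteq> 0"
    using B(2) unfolding f2_indep_def uvw(1) sub3 using s by auto
  have "Z = {0, u, v, w, u + v, u + w, v + w, u + (v + w)}"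
    unfolding B(3)[symmetric] uvw(1) f2_span_def sub3
  proof (intro equalityI subsetI)
    fix z assume "z \<in> {sum id T |T. T = {} \<or> T = {u} \<or> T = {v} \<or> T = {w} \<or> T = {u,v} \<or> T = {u,w} \<or> T = {v,w} \<or> T = {u,v,w}}"
    then obtain T where "z = sum id T" "T = {} \<or> T = {u} \<or> T = {v} \<or> T = {w} \<or> T = {u,v} \<or> T = {u,w} \<or> T = {v,w} \<or> T = {u,v,w}" by blast
    thus "z \<in> {0, u, v, w, u + v, u + w, v + w, u + (v + w)}" using s by auto
  next
    fix z assume "z \<in> {0, u, v, w, u + v, u + w, v + w, u + (v + w)}"
    hence "z = sum id {} \<or> z = sum id {u} \<or> z = sum id {v} \<or> z = sum id {w} \<or> z = sum id {u,v} \<or> z = sum id {u,w} \<or> z = sum id {v,w} \<or> z = sum id {u,v,w}" using s by auto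
    thus "z \<in> {sum id T |T. T = {} \<or> T = {u} \<or> T = {v} \<or> T = {w} \<or> T = {u,v} \<or> T = {u,w} \<or> T = {v,w} \<or> T = {u,v,w}}" by blast
  qed
  thus ?thesis using nz by blast
qed

lemma count7_dim3:
  assumes c: "char2 TYPE('a::field)" and d: "f2_subspace_dim (Z::'a set) 3"
  shows "card {Y. f2_subspace_dim Y 2 \<and> Y \<subseteq> Z} = 7"
proof -
  obtain u v w where h: "u \<noteq> 0" "v \<noteq> 0" "w \<noteq> 0" "u + v \<noteq> 0" "u + w \<noteq> 0" "v + w \<noteq> 0" "u + (v + w) \<noteq> 0"
     "Z = {0, u, v, w, u + v, u + w, v + w, u + (v + w)}" using dim3_D[OF d] by blast
  show ?thesis by (rule count7[OF c h])
qed



lemma fermat_ff: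
  fixes a :: "'a::{field,finite}"
  assumes "a \<noteq> 0"
  shows "a ^ (card (UNIV::'a set) - 1) = 1"
proof -
  let ?U = "UNIV - {0::'a}"
  have cU: "card ?U = card (UNIV::'a set) - 1" by (simp add: card_Diff_singleton)
  have bij: "bij_betw ((*) a) ?U ?U"
    unfolding bij_betw_def
  proof
    show "inj_on ((*) a) ?U" using assms by (auto intro: inj_onI)
    show "(*) a ` ?U = ?U"
    proof (intro equalityI subsetI)
      fix x assume "x \<in> (*) a ` ?U" thus "x \<in> ?U" using assms by auto
    next
      fix x assume "x \<in> ?U"
      hence "x = a * (x / a)" "x / a \<in> ?U" using assms by auto
      thus "x \<in> (*) a ` ?U" by blast
    qed
  qed
  have "prod (\<lambda>x. a * x) ?U = prod id ?U"
    using prod.reindex_bij_betw[OF bij, of id] by simp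
  moreover have "prod (\<lambda>x. a * x) ?U = a ^ card ?U * prod id ?U"
    by (simp add: prod.distrib)
  moreover have "prod id ?U \<noteq> 0" by simp
  ultimately show ?thesis unfolding cU[symmetric] by simp
qed

lemma pow_modN:
  fixes a :: "'a::field"
  assumes "a ^ N = 1"
  shows "a ^ m = a ^ (m mod N)"
proof -
  have "a ^ m = a ^ (N * (m div N) + m mod N)" by simp
  also have "\<dots> = (a ^ N) ^ (m div N) * a ^ (m mod N)" by (simp only: power_add power_mult)
  finally show ?thesis using assms by simp
qed

lemma prim_facts:
  fixes a :: "'a::{field,finite}"
  assumes p: "primitive_elem a" and N: "N = card (UNIV::'a set) - 1"
  shows "a ^ N = 1" "N > 0" "inj_on (\<lambda>i. a ^ i) {..<N}" "(\<lambda>i. a ^ i) ` {..<N} = UNIV - {0}"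
proof -
  have a0: "a \<noteq> 0" using p unfolding primitive_elem_def by blast
  show aN: "a ^ N = 1" using fermat_ff[OF a0] N by simp
  have "card (UNIV::'a set) \<ge> 2"
  proof -
    have "{0::'a, 1} \<subseteq> UNIV" by simp
    hence "card {0::'a, 1} \<le> card (UNIV::'a set)" by (rule card_mono[OF finite_UNIV])
    thus ?thesis by simp
  qed
  thus Np: "N > 0" using N by simp
  show im: "(\<lambda>i. a ^ i) ` {..<N} = UNIV - {0}"
  proof (intro equalityI subsetI)
    fix x assume "x \<in> (\<lambda>i. a ^ i) ` {..<N}" thus "x \<in> UNIV - {0}" using a0 by auto
  next
    fix x assume "x \<in> UNIV - {0::'a}"
    then obtain i where "x = a ^ i" using p unfolding primitive_elem_def by auto
    hence "x = a ^ (i mod N)" "i mod N < N" using pow_modN[OF aN] Np by auto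
    thus "x \<in> (\<lambda>i. a ^ i) ` {..<N}" by blast
  qed
  have "card ((\<lambda>i. a ^ i) ` {..<N}) = card {..<N}"
    unfolding im using N by (simp add: card_Diff_singleton)
  thus "inj_on (\<lambda>i. a ^ i) {..<N}" by (rule eq_card_imp_inj_on[OF finite_lessThan])
qed

lemma pow_eq_mod:
  fixes a :: "'a::{field,finite}"
  assumes p: "primitive_elem a" and N: "N = card (UNIV::'a set) - 1"
    and e: "a ^ m = a ^ m'"
  shows "m mod N = m' mod N"
proof -
  note f = prim_facts[OF p N]
  have "a ^ (m mod N) = a ^ (m' mod N)" using e pow_modN[OF f(1)] by metis
  thus ?thesis using f(3) f(2) unfolding inj_on_def by auto
qed

lemma Phi_eq:
  fixes a :: "'a::{field,finite}"
  assumes p: "primitive_elem a" and N: "N = card (UNIV::'a set) - 1"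
  shows "Phi a N j = (*) (a ^ j)"
proof
  fix x
  note f = prim_facts[OF p N]
  show "Phi a N j x = a ^ j * x"
  proof (cases "x = 0")
    case True thus ?thesis by (simp add: Phi_def)
  next
    case False
    then obtain i where i: "i < N" "a ^ i = x" using f(4) by (metis DiffI UNIV_I empty_iff image_iff insert_iff lessThan_iff)
    have "\<exists>!i. i < N \<and> a ^ i = x" using i f(3) unfolding inj_on_def by auto
    hence "dlog a N x < N \<and> a ^ dlog a N x = x" unfolding dlog_def by (rule theI')
    hence "a ^ ((dlog a N x + j) mod N) = x * a ^ j"
      using pow_modN[OF f(1), of "dlog a N x + j"] by (simp add: power_add)
    thus ?thesis using False by (simp add: Phi_def mult.commute)
  qed
qed



lemma core:
  fixes a :: "'a::{field,finite}"
  assumes p: "primitive_elem a" and N: "N = card (UNIV::'a set) - 1"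
    and cI: "card I = 7" and cD: "card (Delta N I) = 42"
    and jk: "j < N" "k < N" "j \<noteq> k"
    and r: "r1 \<in> I" "r2 \<in> I" "s1 \<in> I" "s2 \<in> I" "r1 \<noteq> r2"
    and e: "a ^ (r1 + j) = a ^ (s1 + k)" "a ^ (r2 + j) = a ^ (s2 + k)"
  shows False
proof -
  have fI: "finite I" using cI by (metis card.infinite zero_neq_numeral)
  define D where "D = Sigma I (\<lambda>r. I - {r})"
  define f where "f = (\<lambda>(r::nat, s::nat). (int r - int s) mod int N)"
  have "card D = (\<Sum>r\<in>I. card (I - {r}))" unfolding D_def using fI by simp
  also have "\<dots> = (\<Sum>r\<in>I. 6)" using fI cI by (intro sum.cong) (simp_all add: card_Diff_singleton)
  also have "\<dots> = 42" using cI by simp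
  finally have cardD: "card D = 42" .
  have "Delta N I = f ` D" unfolding Delta_def f_def D_def by auto
  hence injf: "inj_on f D" using cardD cD fI unfolding D_def
    by (intro eq_card_imp_inj_on) (auto simp: D_def)
  have step: "(r, s) \<in> D \<and> f (r, s) = (int k - int j) mod int N"
    if rs: "r \<in> I" "s \<in> I" "a ^ (r + j) = a ^ (s + k)" for r s
  proof -
    have "(r + j) mod N = (s + k) mod N" by (rule pow_eq_mod[OF p N rs(3)])
    hence "int ((r + j) mod N) = int ((s + k) mod N)" by simp
    hence "(int r + int j) mod int N = (int s + int k) mod int N" by (simp add: zmod_int)
    hence dv: "int N dvd (int r + int j) - (int s + int k)" by (simp add: mod_eq_dvd_iff)
    have "(int r - int s) mod int N = (int k - int j) mod int N"
      unfolding mod_eq_dvd_iff using dv by (simp add: algebra_simps)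
    moreover have "r \<noteq> s"
    proof
      assume "r = s"
      hence "int N dvd int j - int k" using dv by (simp add: algebra_simps)
      hence "int j mod int N = int k mod int N" by (simp add: mod_eq_dvd_iff)
      hence "int (j mod N) = int (k mod N)" by (simp add: zmod_int)
      thus False using jk by simp
    qed
    ultimately show ?thesis using rs unfolding D_def f_def by auto
  qed
  have "(r1, s1) = (r2, s2)"
    using step[OF r(1) r(3) e(1)] step[OF r(2) r(4) e(2)] injf unfolding inj_on_def by metis
  thus False using r(5) by simp
qed

lemma memb:
  assumes "y \<in> (*) c ` insert 0 ((\<lambda>i. a ^ i) ` I)" "y \<noteq> (0::'a::field)"
  shows "\<exists>r\<in>I. y = a ^ (r + j) \<or> c \<noteq> a ^ j"
  using assms by (auto simp: power_add mult.commute)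



lemma memb2:
  assumes "y \<in> (*) (a ^ j) ` insert 0 ((\<lambda>i. a ^ i) ` I)" "y \<noteq> (0::'a::field)"
  shows "\<exists>r\<in>I. y = a ^ (r + j)"
  using assms by (auto simp: power_add mult.commute)

theorem lemma8:
  fixes a :: "'a::{field,finite}" and n :: nat and I :: "nat set" and X :: "'a set"
  assumes "n \<ge> 3"
    and "card (UNIV :: 'a set) = 2 ^ n"
    and "char2 TYPE('a)"
    and "primitive_elem a"
    and "I \<subseteq> {..<2 ^ n - 1}" and "card I = 7"
    and "X = insert 0 ((\<lambda>i. a ^ i) ` I)"
    and "f2_subspace_dim X 3"
    and "card (Delta (2 ^ n - 1) I) = 42"
  shows "(\<forall>j < 2 ^ n - 1. f2_subspace_dim (Phi_set a (2 ^ n - 1) j X) 3)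
       \<and> inj_on (\<lambda>j. Phi_set a (2 ^ n - 1) j X) {..<2 ^ n - 1}
       \<and> (\<forall>j < 2 ^ n - 1. card {Y. f2_subspace_dim Y 2 \<and> Y \<subseteq> Phi_set a (2 ^ n - 1) j X} = 7)
       \<and> (\<forall>j < 2 ^ n - 1. \<forall>k < 2 ^ n - 1. \<forall>Y. j \<noteq> k \<longrightarrow> f2_subspace_dim Y 2
            \<longrightarrow> Y \<subseteq> Phi_set a (2 ^ n - 1) j X \<longrightarrow> \<not> Y \<subseteq> Phi_set a (2 ^ n - 1) k X)
       \<and> card (\<Union>j < 2 ^ n - 1. {Y. f2_subspace_dim Y 2 \<and> Y \<subseteq> Phi_set a (2 ^ n - 1) j X})
           = 7 * (2 ^ n - 1)"
proof -
  define N where "N = (2::nat) ^ n - 1"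
  have NN: "N = card (UNIV::'a set) - 1" using assms(2) N_def by simp
  note p = assms(4) and c = assms(3)
  note f = prim_facts[OF p NN]
  have a0: "a \<noteq> 0" using p unfolding primitive_elem_def by blast
  have PS: "Phi_set a N j X = (*) (a ^ j) ` X" for j
    unfolding Phi_set_def Phi_eq[OF p NN] ..
  define M where "M j = (*) (a ^ j) ` X" for j
  have P1: "f2_subspace_dim (M j) 3" for j
    unfolding M_def by (rule scale_dim[OF _ assms(8)]) (simp add: a0)
  have key: False if jk: "j < N" "k < N" "j \<noteq> k" and xy: "x \<noteq> y" "x \<noteq> 0" "y \<noteq> 0"
    and m: "x \<in> M j" "x \<in> M k" "y \<in> M j" "y \<in> M k" for j k x y
  proof -
    obtain r1 where r1: "r1 \<in> I" "x = a ^ (r1 + j)" using memb2[of x a j I] m(1) xy(2) unfolding M_def assms(7) by blast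
    obtain s1 where s1: "s1 \<in> I" "x = a ^ (s1 + k)" using memb2[of x a k I] m(2) xy(2) unfolding M_def assms(7) by blast
    obtain r2 where r2: "r2 \<in> I" "y = a ^ (r2 + j)" using memb2[of y a j I] m(3) xy(3) unfolding M_def assms(7) by blast
    obtain s2 where s2: "s2 \<in> I" "y = a ^ (s2 + k)" using memb2[of y a k I] m(4) xy(3) unfolding M_def assms(7) by blast
    have "r1 \<noteq> r2" using r1 r2 xy(1) by auto
    thus False using core[OF p NN assms(6) assms(9)[folded N_def] jk r1(1) r2(1) s1(1) s2(1)] r1 r2 s1 s2 by auto
  qed
  have P2: "inj_on M {..<N}"
  proof (rule inj_onI, rule ccontr)
    fix j k assume jk: "j \<in> {..<N}" "k \<in> {..<N}" "M j = M k" "j \<noteq> k"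
    obtain r1 where r1: "r1 \<in> I" using assms(6) by (metis card.empty ex_in_conv zero_neq_numeral)
    have "card (I - {r1}) = 6" using assms(6) r1 by (simp add: card_Diff_singleton)
    then obtain r2 where r2: "r2 \<in> I" "r2 \<noteq> r1" by (metis DiffD1 DiffD2 card.empty ex_in_conv insertI1 zero_neq_numeral)
    have "r1 < N" "r2 < N" using assms(5) r1 r2 N_def by auto
    hence ne: "a ^ r1 \<noteq> a ^ r2" using f(3) r2(2) unfolding inj_on_def by auto
    define x where "x = a ^ j * a ^ r1"
    define y where "y = a ^ j * a ^ r2"
    have "x \<in> M j" "y \<in> M j" unfolding x_def y_def M_def assms(7) using r1 r2 by auto
    moreover have "x \<noteq> y" "x \<noteq> 0" "y \<noteq> 0" using ne a0 unfolding x_def y_def by auto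
    ultimately show False using key[of j k x y] jk by auto
  qed
  have P3: "card {Y. f2_subspace_dim Y 2 \<and> Y \<subseteq> M j} = 7" for j
    by (rule count7_dim3[OF c P1])
  have P4: "\<not> Y \<subseteq> M k" if h: "j < N" "k < N" "j \<noteq> k" "f2_subspace_dim Y 2" "Y \<subseteq> M j" for j k Y
  proof
    assume Yk: "Y \<subseteq> M k"
    obtain x y where "x \<noteq> 0" "y \<noteq> 0" "x \<noteq> y" "Y = {0,x,y,x+y}" using dim2_D[OF h(4)] by blast
    thus False using key[of j k x y] h Yk by auto
  qed
  have P5: "card (\<Union>j < N. {Y. f2_subspace_dim Y 2 \<and> Y \<subseteq> M j}) = 7 * N"
  proof -
    have "card (\<Union>j < N. {Y. f2_subspace_dim Y 2 \<and> Y \<subseteq> M j}) = (\<Sum>j<N. card {Y. f2_subspace_dim Y 2 \<and> Y \<subseteq> M j})"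
      by (rule card_UN_disjoint) (auto dest: P4)
    also have "\<dots> = 7 * N" using P3 by simp
    finally show ?thesis .
  qed
  show ?thesis
    unfolding N_def[symmetric] PS M_def[symmetric]
    using P1 P2 P3 P4 P5 by blast
qed

end
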